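(* There exist polynomials $p_n(k)\in\mathbb{Q}[k]$, $n\geq0$, with $\deg p_n=2n$, such that for all integers $k\geq0$, \[ \left[ \sqrt{ \wp(p,q) - 4G_2(q) }^{\,2k+1} \right]_{p^0} = \frac{1}{2^{2k+1}}\sum_{n \geq 0} p_n(k)\, q^n. \]
   Context: For even $k\geq2$, $G_k(q)=-\frac{B_k}{2k}+\sum_{n\geq1}\sum_{d|n}d^{k-1}q^n$, in particular $G_2=-\frac1{24}+\sum_{n\geq1}\sigma_1(n)q^n$. Set $\wp(p,q)=\frac{1}{12}+\frac{p}{(1-p)^2}+\sum_{d\geq1}\sum_{k|d}k(p^k-2+p^{-k})q^d$, a power series in $q$ whose coefficients are rational functions of $p$; then $\wp(p,q)-4G_2(q)=\frac14\frac{(p+1)^2}{(p-1)^2}+O(q)$. $\sqrt{\wp(p,q)-4G_2(q)}$ denotes the unique power series in $q$ with coefficients rational functions of $p$ whose square is $\wp(p,q)-4G_2(q)$ and whose $q^0$-coefficient is $\frac12\frac{p+1}{p-1}$. For a power series in $q$ with rational-function coefficients in $p$ (with poles only at $p\in\{0,\pm1\}$), $[\cdot]_{p^0}$ expands each $q$-coefficient as a Laurent series in $p^{-1}$ (i.e. in the region $|p|>1$) and takes its constant term, giving a power series in $q$. *)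

theory Defs
  imports "HOL-Computational_Algebra.Computational_Algebra"
begin

text \<open>Coefficient field for q-series: formal Laurent series in the variable p^(-1)
  (finitely many negative powers of p^(-1)) over the rationals.  The variable p itself is
  the element fls_X_inv; a rational function of p evaluated in this field is exactly its
  Laurent expansion in the region |p| > 1.\<close>

abbreviation pvar :: "rat fls" where "pvar \<equiv> fls_X_inv"

definition sigma1 :: "nat \<Rightarrow> nat" where
  "sigma1 n = (\<Sum>d | d dvd n. d)"

definition G2 :: "'a::field_char_0 fps" where
  "G2 = Abs_fps (\<lambda>n. if n = 0 then - 1 / 24 else of_nat (sigma1 n))"

definition wp :: "rat fls fps" where
  "wp = Abs_fps (\<lambda>d. if d = 0 then 1 / 12 + pvar / (1 - pvar)\<^sup>2
        else (\<Sum>k | k dvd d. of_nat k * (pvar ^ k - 2 + inverse pvar ^ k)))"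

definition sqrtW :: "rat fls fps" where
  "sqrtW = (THE S. S\<^sup>2 = wp - 4 * G2 \<and> fps_nth S 0 = (1 / 2) * (pvar + 1) / (pvar - 1))"

definition const_p :: "rat fls fps \<Rightarrow> rat fps" where
  "const_p F = Abs_fps (\<lambda>n. fls_nth (fps_nth F n) 0)"

end

theory Submission
  imports Defs
begin

unbundle fps_syntax




definition oge :: "rat fls \<Rightarrow> int \<Rightarrow> bool" where
  "oge f a \<longleftrightarrow> (\<forall>k<a. f $$ k = 0)"

lemma oge_sub: "oge f a \<longleftrightarrow> f = 0 \<or> a \<le> fls_subdegree f"
  unfolding oge_def
  by (metis fls_eq0_below_subdegree fls_subdegree_geI fls_zero_nth linorder_not_le nth_fls_subdegree_nonzero order_less_le_trans)

lemma oge_mult: "oge f a \<Longrightarrow> oge g b \<Longrightarrow> oge (f*g) (a+b)"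
  unfolding oge_sub
  by (metis add_mono fls_subdegree_mult mult_eq_0_iff)

lemma oge_add: "oge f a \<Longrightarrow> oge g a \<Longrightarrow> oge (f+g) a"
  unfolding oge_def by simp

lemma oge_diff: "oge f a \<Longrightarrow> oge g a \<Longrightarrow> oge (f-g) a"
  unfolding oge_def by simp

lemma oge_uminus: "oge f a \<Longrightarrow> oge (-f) a"
  unfolding oge_def by simp

lemma oge_mono: "oge f a \<Longrightarrow> b \<le> a \<Longrightarrow> oge f b"
  unfolding oge_def by simp

lemma oge_0[simp]: "oge 0 a"
  unfolding oge_def by simp

lemma oge_sum: "(\<And>i. i \<in> A \<Longrightarrow> oge (f i) a) \<Longrightarrow> oge (\<Sum>i\<in>A. f i) a"
  unfolding oge_def by (simp add: fls_nth_sum)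

lemma oge_const: "oge (fls_const c) 0"
  unfolding oge_def by simp

lemma oge_one: "oge 1 0"
  unfolding oge_def by simp

lemma oge_of_nat: "oge (of_nat c) 0"
  unfolding oge_def by (simp add: fls_of_nat_nth)

lemma oge_numeral: "oge (numeral c) 0"
  unfolding oge_def by simp

lemma oge_X: "oge fls_X 1"
  unfolding oge_sub by simp

lemma oge_X_pow: "oge (fls_X ^ k) 0"
  unfolding oge_sub by simp

lemma oge_Xinv_pow: "k \<le> n \<Longrightarrow> oge (fls_X_inv ^ k) (- int n)"
  unfolding oge_sub by simp

lemma oge_Xinv: "oge fls_X_inv (-1)"
  unfolding oge_sub by simp

lemma oge_power: "oge f a \<Longrightarrow> oge (f ^ m) (int m * a)"
  by (induction m) (auto simp: oge_one algebra_simps dest: oge_mult)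

lemma oge_inverse: "f $$ 0 \<noteq> 0 \<Longrightarrow> oge f 0 \<Longrightarrow> oge (inverse f) 0"
proof -
  assume a: "f $$ 0 \<noteq> 0" "oge f 0"
  then have "fls_subdegree f = 0"
    by (metis fls_subdegree_leI oge_sub order_antisym fls_zero_nth)
  then show ?thesis unfolding oge_sub by simp
qed

definition wt :: "int \<Rightarrow> rat fls fps \<Rightarrow> bool" where
  "wt w F \<longleftrightarrow> (\<forall>n. oge (F$n) (w - 2 * int n))"

lemma wt_mult: assumes "wt a F" "wt b G" shows "wt (a+b) (F*G)"
  unfolding wt_def
proof
  fix n
  show "oge ((F*G)$n) (a + b - 2 * int n)"
    unfolding fps_mult_nth
  proof (rule oge_sum)
    fix i assume i: "i \<in> {0..n}"
    have "oge (F$i * G$(n-i)) ((a - 2 * int i) + (b - 2 * int (n-i)))"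
      using assms unfolding wt_def by (blast intro: oge_mult)
    moreover have "(a - 2 * int i) + (b - 2 * int (n-i)) = a + b - 2 * int n"
      using i by auto
    ultimately show "oge (F$i * G$(n-i)) (a + b - 2 * int n)" by (metis add_diff_eq)
  qed
qed

lemma wt_add: "wt a F \<Longrightarrow> wt a G \<Longrightarrow> wt a (F+G)"
  unfolding wt_def by (simp add: oge_add)

lemma wt_diff: "wt a F \<Longrightarrow> wt a G \<Longrightarrow> wt a (F-G)"
  unfolding wt_def by (simp add: oge_diff)

lemma wt_mono: "wt a F \<Longrightarrow> b \<le> a \<Longrightarrow> wt b F"
  unfolding wt_def by (meson diff_right_mono oge_mono)

lemma wt_one: "wt 0 1"
  unfolding wt_def by (auto simp: oge_one)

lemma wt_const: "oge c a \<Longrightarrow> wt a (fps_const c)"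
  unfolding wt_def by (auto intro: oge_mono)

lemma wt_power: "wt a F \<Longrightarrow> wt (int m * a) (F ^ m)"
  by (induction m) (auto simp: wt_one algebra_simps dest: wt_mult)

lemma wt_nth: "wt w F \<Longrightarrow> k + 2 * int n < w \<Longrightarrow> F $ n $$ k = 0"
  unfolding wt_def oge_def by auto

lemma wt_close_power:
  assumes "wt a F" "wt a G" "wt (a+1) (F - G)"
  shows "wt (int m * a + 1) (F^m - G^m)"
proof (induction m)
  case 0
  then show ?case unfolding wt_def by simp
next
  case (Suc m)
  have e: "F^Suc m - G^Suc m = F*(F^m - G^m) + (F - G)*G^m"
    by (simp add: algebra_simps)
  have "wt (a + (int m * a + 1)) (F*(F^m - G^m))"
    using Suc assms by (intro wt_mult) auto
  moreover have "wt ((a+1) + int m * a) ((F - G)*G^m)"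
    using assms by (intro wt_mult wt_power) auto
  ultimately show ?case unfolding e
    by (intro wt_add) (auto simp: algebra_simps)
qed





abbreviation "xx \<equiv> (fls_X :: rat fls)"
definition "WW = wp - 4 * G2"
definition "s0 = (1 / 2) * (pvar + 1) / (pvar - 1)"

lemma pvar_inv: "pvar = inverse xx" by (simp add: fls_inverse_X)

lemma xx_nz: "xx \<noteq> 0" by simp
lemma one_minus_x_nz: "1 - xx \<noteq> 0"
proof
  assume "1 - xx = 0" then have "(1 - xx) $$ 0 = 0" by simp
  then show False by simp
qed
lemma one_plus_x_nz: "1 + xx \<noteq> 0"
proof
  assume "1 + xx = 0" then have "(1 + xx) $$ 0 = 0" by simp
  then show False by simp
qed

lemma WW_nth: "WW $ n = wp $ n - 4 * G2 $ n"
  unfolding WW_def by (simp add: fps_numeral_fps_const)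

lemma WW0: "WW $ 0 = 1/12 + pvar / (1 - pvar)\<^sup>2 + 1/6"
  unfolding WW_nth by (simp add: wp_def G2_def)

lemma gen_nz: fixes y :: "'a::field" assumes "1 - y \<noteq> 0" shows "y - 1 \<noteq> 0" "inverse y - 1 \<noteq> 0 \<or> y = 0" "1 - inverse y \<noteq> 0 \<or> y = 0"
  using assms by (auto simp: field_simps)

lemma gen_core: fixes y a b :: "'a::field_char_0" assumes y: "y\<noteq>0" and a: "a \<noteq> 0" and b: "b \<noteq> 0"
  and ea: "a = 1 - y" and eb: "b = 1 + y"
  shows "1/12 + inverse y / (1 - inverse y)^2 + 1/6 = ((1/2)*(inverse y + 1)/(inverse y - 1))^2"
    "(1/2)*(inverse y + 1)/(inverse y - 1) \<noteq> 0"
    "inverse (2 * ((1/2)*(inverse y + 1)/(inverse y - 1))) = (1 - y) * inverse (1 + y)"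
    "2 * ((1/2)*(inverse y + 1)/(inverse y - 1)) - 1 = 2 * y * inverse (1 - y)"
    "4 * (1/12 + inverse y / (1 - inverse y)^2 + 1/6) - 1 - 4 * y = y * y * (8 - 4 * y) * inverse ((1 - y)^2)"
proof -
  have r: "inverse y - 1 = a / y" "1 - inverse y = - (a / y)" "inverse y + 1 = b / y"
    "1 - y = a" "1 + y = b"
    using y unfolding ea eb by (simp_all add: field_simps)
  have e2: "4 = 2 * (2::'a)" by simp
  show "1/12 + inverse y / (1 - inverse y)^2 + 1/6 = ((1/2)*(inverse y + 1)/(inverse y - 1))^2"
    unfolding r using y a b by (simp add: field_simps power2_eq_square) (simp add: ea eb algebra_simps)
  show "(1/2)*(inverse y + 1)/(inverse y - 1) \<noteq> 0"
    unfolding r using y a b by (simp add: field_simps)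
  show "inverse (2 * ((1/2)*(inverse y + 1)/(inverse y - 1))) = (1 - y) * inverse (1 + y)"
    unfolding r using y a b by (simp add: field_simps)
  show "2 * ((1/2)*(inverse y + 1)/(inverse y - 1)) - 1 = 2 * y * inverse (1 - y)"
    unfolding r using y a b by (simp add: field_simps) (simp add: ea eb algebra_simps)
  show "4 * (1/12 + inverse y / (1 - inverse y)^2 + 1/6) - 1 - 4 * y = y * y * (8 - 4 * y) * inverse ((1 - y)^2)"
    unfolding r using y a b by (simp add: field_simps power2_eq_square) (simp add: ea eb algebra_simps)
qed

lemmas gen = gen_core[OF xx_nz one_minus_x_nz one_plus_x_nz refl refl]

lemma WW0_s0: "WW $ 0 = s0 ^ 2"
  unfolding WW0 s0_def pvar_inv by (rule gen)

lemma s0_nz: "s0 \<noteq> 0"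
  unfolding s0_def pvar_inv by (rule gen)

lemma inv_2s0: "inverse (2 * s0) = (1 - xx) * inverse (1 + xx)"
  unfolding s0_def pvar_inv by (rule gen)

lemma two_s0_m1: "2 * s0 - 1 = 2 * xx * inverse (1 - xx)"
  unfolding s0_def pvar_inv by (rule gen)

lemma four_W0: "4 * WW $ 0 - 1 - 4 * xx = xx * xx * (8 - 4 * xx) * inverse ((1 - xx)^2)"
  unfolding WW0 pvar_inv by (rule gen)

lemma oge_inv_1px: "oge (inverse (1 + xx)) 0"
  by (rule oge_inverse) (auto intro!: oge_add oge_one oge_mono[OF oge_X])

lemma oge_inv_1mx: "oge (inverse (1 - xx)) 0"
  by (rule oge_inverse) (auto intro!: oge_diff oge_one oge_mono[OF oge_X])

lemma oge_inv_2s0: "oge (inverse (2 * s0)) 0"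
  unfolding inv_2s0 using oge_mult[OF _ oge_inv_1px, of "1 - xx" 0]
  by (simp add: oge_diff oge_one oge_mono[OF oge_X])

lemma oge_2s0m1: "oge (2 * s0 - 1) 1"
  unfolding two_s0_m1 using oge_mult[OF oge_mult[OF oge_numeral oge_X] oge_inv_1mx]
  by simp

lemma half_const: "(1/2 :: rat fls) = fls_const (1/2)"
  by (metis fls_const_1 fls_const_divide_const fls_const_numeral)

lemma oge_s0: "oge s0 0"
proof -
  have "s0 = (1/2) * ((2 * s0 - 1) + 1)" by simp
  moreover have "oge ((1/2) * ((2 * s0 - 1) + 1)) 0"
    using oge_mult[OF oge_const[of "1/2"] oge_add[OF oge_mono[OF oge_2s0m1] oge_one]]
    by (simp add: half_const)
  ultimately show ?thesis by simp
qed





lemma WW_pos: assumes "n > 0"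
  shows "WW $ n = (\<Sum>k | k dvd n. of_nat k * (pvar ^ k - 2 + xx ^ k)) - 4 * of_nat (sigma1 n)"
  unfolding WW_nth using assms by (simp add: wp_def G2_def fls_inverse_X_inv power_inverse[symmetric])

lemma oge_WW: assumes "n > 0" shows "oge (WW $ n) (- int n)"
  unfolding WW_pos[OF assms]
proof (intro oge_diff oge_sum)
  fix k assume "k \<in> {k. k dvd n}"
  then have "k \<le> n" using assms by (simp add: dvd_imp_le)
  then have "oge (pvar ^ k - 2 + xx ^ k) (- int n)"
    by (intro oge_add oge_diff oge_Xinv_pow oge_mono[OF oge_numeral] oge_mono[OF oge_X_pow]) auto
  then show "oge (of_nat k * (pvar ^ k - 2 + xx ^ k)) (- int n)"
    using oge_mult[OF oge_of_nat] by fastforce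
next
  show "oge (4 * of_nat (sigma1 n)) (- int n)"
    using oge_mult[OF oge_numeral oge_of_nat] by (rule oge_mono) simp
qed

lemma WW1: "WW $ 1 = pvar - 6 + xx"
proof -
  have "{k. k dvd (1::nat)} = {1}" by auto
  moreover have "sigma1 1 = 1" unfolding sigma1_def by simp
  ultimately show ?thesis by (simp add: WW_pos)
qed

definition "ZZ = 4 * WW - 1"
definition "Z1 = fps_const (4 * xx) + fps_X * fps_const (4 * pvar)"

lemma ZZ_nth: "ZZ $ n = 4 * WW $ n - (if n = 0 then 1 else 0)"
  unfolding ZZ_def by (simp add: fps_numeral_fps_const)

lemma Z1_nth: "Z1 $ n = (if n = 0 then 4 * xx else if n = 1 then 4 * pvar else 0)"
  unfolding Z1_def by simp

lemma wt_Z1: "wt 1 Z1"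
  unfolding wt_def Z1_nth
proof
  fix n
  show "oge (if n = 0 then 4 * xx else if n = 1 then 4 * pvar else 0) (1 - 2 * int n)"
  proof -
    have "oge (4 * xx) 1" using oge_mult[OF oge_numeral oge_X] by simp
    moreover have "oge (4 * pvar) (-1)" using oge_mult[OF oge_numeral oge_Xinv] by simp
    ultimately show ?thesis by (auto elim: oge_mono)
  qed
qed

lemma wt_ZZ_Z1: "wt 2 (ZZ - Z1)"
  unfolding wt_def
proof
  fix n
  show "oge ((ZZ - Z1) $ n) (2 - 2 * int n)"
  proof (cases "n = 0")
    case True
    have i: "oge (inverse ((1 - xx)^2)) 0"
      using oge_power[OF oge_inv_1mx, of 2] by (simp add: power_inverse)
    have "oge (8 - 4 * xx) 0"
      by (intro oge_diff oge_numeral oge_mono[OF oge_mult[OF oge_numeral oge_X]]) simp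
    then have "oge (xx * xx * (8 - 4 * xx) * inverse ((1 - xx)^2)) (1 + 1 + 0 + 0)"
      by (intro oge_mult oge_X i)
    then show ?thesis using True four_W0 by (simp add: ZZ_nth Z1_nth)
  next
    case n1: False
    show ?thesis
    proof (cases "n = 1")
      case True
      have "(ZZ - Z1) $ 1 = 4 * xx - 24" by (simp only: fps_sub_nth ZZ_nth Z1_nth WW1) (simp add: algebra_simps)
      then have "(ZZ - Z1) $ n = 4 * xx - 24" using True by simp
      moreover have "oge (4 * xx - 24) 0"
        by (intro oge_diff oge_numeral oge_mono[OF oge_mult[OF oge_numeral oge_X]]) simp
      ultimately show ?thesis using True by simp
    next
      case False
      then have "(ZZ - Z1) $ n = 4 * WW $ n" using n1 by (simp add: ZZ_nth Z1_nth)
      moreover have "oge (4 * WW $ n) (0 + - int n)"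
        using n1 by (intro oge_mult oge_numeral oge_WW) simp
      ultimately show ?thesis using n1 False by (auto elim: oge_mono)
    qed
  qed
qed

lemma wt_ZZ: "wt 1 ZZ"
proof -
  have "ZZ = (ZZ - Z1) + Z1" by simp
  then show ?thesis using wt_add[OF wt_mono[OF wt_ZZ_Z1] wt_Z1] by simp
qed





definition "SS = fps_radical (\<lambda>_ _. s0) 2 WW"

lemma WW0_nz: "WW $ 0 \<noteq> 0" using WW0_s0 s0_nz by simp

lemma SS_sq: "SS ^ 2 = WW"
  using power_radical[of WW "\<lambda>_ _. s0" 1] WW0_nz WW0_s0 unfolding SS_def
  by (simp add: numeral_2_eq_2)

lemma SS_0: "SS $ 0 = s0" unfolding SS_def by simp

lemma SS_unique: assumes "S ^ 2 = WW" "S $ 0 = s0" shows "S = SS"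
proof -
  have r0: "((\<lambda>_ _. s0) (Suc 1) (WW $ 0)) ^ Suc 1 = WW $ 0"
    using WW0_s0 by (simp add: numeral_2_eq_2)
  have a0: "(\<lambda>_ _. s0) (Suc 1) (WW $ 0) = S $ 0" using assms(2) by simp
  have "S ^ Suc 1 = WW" using assms(1) by (simp add: numeral_2_eq_2)
  then show ?thesis
    using radical_unique[OF r0 a0 WW0_nz] unfolding SS_def by (simp add: numeral_2_eq_2)
qed

lemma sqrtW_eq: "sqrtW = SS"
  unfolding sqrtW_def WW_def[symmetric] s0_def[symmetric]
proof (rule the_equality)
  show "SS\<^sup>2 = WW \<and> SS $ 0 = s0"
    using SS_sq SS_0 by simp
next
  fix S assume a: "S\<^sup>2 = WW \<and> S $ 0 = s0"
  then show "S = SS" using SS_unique by blast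
qed

lemma SS_rec: assumes "n > 0"
  shows "SS $ n = inverse (2 * s0) * (WW $ n - (\<Sum>i\<in>{1..n-1}. SS $ i * SS $ (n - i)))"
proof -
  have "WW $ n = (SS * SS) $ n" using SS_sq by (simp only: power2_eq_square)
  also have "\<dots> = (\<Sum>i\<in>{0..n}. SS $ i * SS $ (n - i))" by (rule fps_mult_nth)
  also have "{0..n} = insert 0 (insert n {1..n-1})" using assms by auto
  also have "(\<Sum>i\<in>insert 0 (insert n {1..n-1}). SS $ i * SS $ (n - i)) =
      SS $ 0 * SS $ n + (SS $ n * SS $ 0 + (\<Sum>i\<in>{1..n-1}. SS $ i * SS $ (n - i)))"
    using assms by (simp add: sum.insert)
  also have "\<dots> = 2 * s0 * SS $ n + (\<Sum>i\<in>{1..n-1}. SS $ i * SS $ (n - i))"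
    unfolding SS_0 by (simp add: algebra_simps)
  finally have h: "2 * s0 * SS $ n = WW $ n - (\<Sum>i\<in>{1..n-1}. SS $ i * SS $ (n - i))"
    by (metis add_diff_cancel_right')
  have nz: "2 * s0 \<noteq> 0" using s0_nz by simp
  have e1: "inverse (2 * s0) * (2 * s0) = 1" using nz by (rule left_inverse)
  have "SS $ n = (inverse (2 * s0) * (2 * s0)) * SS $ n" by (simp only: e1 mult_1_left)
  then have "SS $ n = inverse (2 * s0) * (2 * s0 * SS $ n)" by (metis mult.assoc)
  then show ?thesis unfolding h .
qed

definition "DD = SS - fps_const s0"

lemma oge_SS: "n > 0 \<Longrightarrow> oge (SS $ n) (1 - 2 * int n)"
proof (induction n rule: less_induct)
  case (less n)
  have "oge (WW $ n - (\<Sum>i\<in>{1..n-1}. SS $ i * SS $ (n - i))) (1 - 2 * int n)"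
  proof (intro oge_diff oge_sum)
    show "oge (WW $ n) (1 - 2 * int n)" using oge_WW[OF less.prems] by (rule oge_mono) (use less.prems in simp)
  next
    fix i assume i: "i \<in> {1..n-1}"
    then have "oge (SS $ i * SS $ (n - i)) ((1 - 2 * int i) + (1 - 2 * int (n - i)))"
      using less.prems by (intro oge_mult less.IH) auto
    then show "oge (SS $ i * SS $ (n - i)) (1 - 2 * int n)"
      by (rule oge_mono) (use i in auto)
  qed
  then have "oge (inverse (2 * s0) * (WW $ n - (\<Sum>i\<in>{1..n-1}. SS $ i * SS $ (n - i)))) (0 + (1 - 2 * int n))"
    by (intro oge_mult oge_inv_2s0)
  then have "oge (inverse (2 * s0) * (WW $ n - (\<Sum>i\<in>{1..n-1}. SS $ i * SS $ (n - i)))) (1 - 2 * int n)"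
    by simp
  then show ?case by (subst SS_rec[OF less.prems])
qed

lemma wt_DD: "wt 1 DD"
  unfolding wt_def DD_def
proof
  fix n show "oge ((SS - fps_const s0) $ n) (1 - 2 * int n)"
    by (cases "n = 0") (auto simp: SS_0 oge_SS)
qed

definition "TT = fps_const (fls_const 2) * SS"

lemma wt_TT_1: "wt 1 (TT - 1)"
proof -
  have "TT - 1 = fps_const (fls_const 2) * DD + fps_const (2 * s0 - 1)"
  proof (rule fps_ext)
    fix n show "(TT - 1) $ n = (fps_const (fls_const 2) * DD + fps_const (2 * s0 - 1)) $ n"
      unfolding TT_def DD_def by (cases "n = 0") (simp_all add: right_diff_distrib)
  qed
  moreover have "wt (0 + 1) (fps_const (fls_const 2) * DD)"
    by (intro wt_mult wt_const oge_const wt_DD)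
  moreover have "wt 1 (fps_const (2 * s0 - 1))" by (intro wt_const oge_2s0m1)
  ultimately show ?thesis by (simp add: wt_add)
qed

lemma wt_TT: "wt 0 TT"
proof -
  have "TT = (TT - 1) + 1" by simp
  then show ?thesis using wt_add[OF wt_mono[OF wt_TT_1] wt_one] by simp
qed





definition "cc n i = (TT * ZZ ^ i) $ n $$ 0"

lemma two_fps: "fps_const (fls_const 2) = (2 :: rat fls fps)"
  by (simp add: fps_numeral_fps_const)

lemma TT_sq: "TT ^ 2 = ZZ + 1"
proof -
  have "TT ^ 2 = 4 * SS ^ 2" unfolding TT_def two_fps by (simp add: power_mult_distrib)
  then show ?thesis unfolding SS_sq ZZ_def by simp
qed

lemma TT_pow: "TT ^ (2*k+1) = TT * (ZZ + 1) ^ k"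
proof -
  have "TT ^ (2*k+1) = (TT^2)^k * TT" by (simp only: power_add power_one_right power_mult)
  then show ?thesis unfolding TT_sq by (simp only: mult.commute)
qed

lemma expand: "TT ^ (2*k+1) = (\<Sum>i\<le>k. of_nat (k choose i) * (TT * ZZ^i))"
proof -
  have "TT ^ (2*k+1) = TT * (\<Sum>i\<le>k. of_nat (k choose i) * ZZ^i * 1^(k-i))"
    unfolding TT_pow binomial_ring ..
  also have "\<dots> = (\<Sum>i\<le>k. of_nat (k choose i) * (TT * ZZ^i))"
    by (simp add: sum_distrib_left mult.left_commute)
  finally show ?thesis .
qed

lemma nth_of_nat_mult: "(of_nat m * F) $ n $$ a = of_nat m * (F $ n $$ a)"
  for F :: "rat fls fps"
  by (simp add: fps_of_nat[symmetric])

lemma TT_pow_nth: "(TT ^ m) $ n $$ a = 2 ^ m * ((SS ^ m) $ n $$ a)"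
proof -
  have "TT ^ m = fps_const (fls_const (2 ^ m)) * SS ^ m"
    unfolding TT_def by (simp add: power_mult_distrib fls_const_power)
  then show ?thesis by simp
qed

lemma main_sum: "2^(2*k+1) * ((SS^(2*k+1)) $ n $$ 0) = (\<Sum>i\<le>k. of_nat (k choose i) * cc n i)"
proof -
  have "2^(2*k+1) * ((SS^(2*k+1)) $ n $$ 0) = (TT ^ (2*k+1)) $ n $$ 0"
    by (rule TT_pow_nth[symmetric])
  also have "\<dots> = (\<Sum>i\<le>k. of_nat (k choose i) * cc n i)"
    unfolding expand fps_sum_nth fls_nth_sum nth_of_nat_mult cc_def ..
  finally show ?thesis .
qed

lemma cc_big: assumes "2*n < i" shows "cc n i = 0"
proof -
  have "wt (0 + int i * 1) (TT * ZZ ^ i)" by (intro wt_mult wt_TT wt_power wt_ZZ)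
  then show ?thesis unfolding cc_def by (rule wt_nth) (use assms in simp)
qed

lemma cc_top: "cc n (2*n) = (Z1^(2*n)) $ n $$ 0"
proof -
  define m where "m = 2 * n"
  have w1: "wt (int m * 1 + 1) (ZZ^m - Z1^m)"
    by (rule wt_close_power[OF wt_ZZ wt_Z1]) (use wt_ZZ_Z1 in simp)
  have e: "TT * ZZ^m - Z1^m = TT * (ZZ^m - Z1^m) + (TT - 1) * Z1^m"
    by (simp add: algebra_simps)
  have "wt (0 + (int m * 1 + 1)) (TT * (ZZ^m - Z1^m))" by (intro wt_mult wt_TT w1)
  moreover have "wt (1 + int m * 1) ((TT - 1) * Z1^m)" by (intro wt_mult wt_TT_1 wt_power wt_Z1)
  ultimately have "wt (int m + 1) (TT * ZZ^m - Z1^m)" unfolding e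
    by (intro wt_add) (simp_all add: add.commute)
  then have "(TT * ZZ^m - Z1^m) $ n $$ 0 = 0" by (rule wt_nth) (simp add: m_def)
  then show ?thesis unfolding cc_def m_def[symmetric] by simp
qed





lemma binom_term:
  fixes a b :: "rat fls"
  shows "of_nat C * fps_const a ^ j * (fps_X * fps_const b) ^ l = fps_X ^ l * fps_const (of_nat C * a ^ j * b ^ l)"
proof -
  have "of_nat C * fps_const a ^ j * (fps_X * fps_const b) ^ l
      = fps_X ^ l * (fps_const (of_nat C) * fps_const (a ^ j) * fps_const (b ^ l))"
    by (simp add: power_mult_distrib fps_of_nat[symmetric] fps_const_power mult_ac del: fps_const_mult)
  then show ?thesis by simp
qed

lemma Z1_pow_nth: "(Z1^(2*n)) $ n = of_nat ((2*n) choose n) * 16 ^ n"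
proof -
  define m where "m = 2 * n"
  have xp: "xx * pvar = 1"
    by (simp add: fls_inverse_X[symmetric])
  have q: "(4 * xx) * (4 * pvar) = 16 * (xx * pvar)" by simp
  have h16: "(4 * xx) ^ n * (4 * pvar) ^ n = 16 ^ n"
    unfolding power_mult_distrib[symmetric] q xp by simp
  have e: "Z1 ^ m = (\<Sum>j\<le>m. fps_X ^ (m - j) * fps_const (of_nat (m choose j) * (4 * xx) ^ j * (4 * pvar) ^ (m - j)))"
    unfolding Z1_def binomial_ring binom_term ..
  have "(Z1 ^ m) $ n = (\<Sum>j\<le>m. (if j = n then of_nat (m choose j) * (4 * xx) ^ j * (4 * pvar) ^ (m - j) else 0))"
    unfolding e fps_sum_nth fps_X_power_mult_nth
    by (intro sum.cong refl) (auto simp: m_def)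
  also have "\<dots> = of_nat (m choose n) * (4 * xx) ^ n * (4 * pvar) ^ (m - n)"
    by (simp add: m_def)
  also have "\<dots> = of_nat (m choose n) * ((4 * xx) ^ n * (4 * pvar) ^ n)"
    by (simp add: m_def mult.assoc)
  finally show ?thesis unfolding h16 m_def .
qed

lemma cc_top_val: "cc n (2*n) = of_nat ((2*n) choose n) * 16 ^ n"
proof -
  have "(16 :: rat fls) ^ n = fls_const (16 ^ n)" by (simp add: fls_const_power)
  then show ?thesis unfolding cc_top Z1_pow_nth by (simp add: fls_of_nat_nth)
qed

lemma cc_top_nz: "cc n (2*n) \<noteq> 0"
  unfolding cc_top_val by simp

definition Bp :: "nat \<Rightarrow> rat poly" where
  "Bp i = smult (1 / fact i) (\<Prod>j\<in>{0..<i}. [:- of_nat j, 1:])"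

lemma poly_Bp: "poly (Bp i) (of_nat k) = of_nat (k choose i)"
  unfolding Bp_def binomial_gbinomial gbinomial_prod_rev
  by (simp add: poly_prod field_simps)

lemma prodlin: "degree (\<Prod>j\<in>{0..<i}. [:- of_nat j, 1:] :: rat poly) = i"
    "lead_coeff (\<Prod>j\<in>{0..<i}. [:- of_nat j, 1:] :: rat poly) = 1"
proof -
  show "degree (\<Prod>j\<in>{0..<i}. [:- of_nat j, 1:] :: rat poly) = i"
    by (subst degree_prod_sum_eq) auto
  show "lead_coeff (\<Prod>j\<in>{0..<i}. [:- of_nat j, 1:] :: rat poly) = 1"
    by (simp add: lead_coeff_prod)
qed

lemma degree_Bp: "degree (Bp i) = i" and coeff_Bp: "coeff (Bp i) i = 1 / fact i"
  unfolding Bp_def using prodlin[of i] by auto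

definition PP :: "nat \<Rightarrow> rat poly" where
  "PP n = (\<Sum>i\<in>{0..2*n}. smult (cc n i) (Bp i))"

lemma poly_PP: "poly (PP n) (of_nat k) = (\<Sum>i\<in>{0..2*n}. cc n i * of_nat (k choose i))"
  unfolding PP_def by (simp add: poly_sum poly_Bp)

lemma coeff_PP: "coeff (PP n) (2*n) = cc n (2*n) / fact (2*n)"
proof -
  have "coeff (PP n) (2*n) = (\<Sum>i\<in>{0..2*n}. cc n i * coeff (Bp i) (2*n))"
    unfolding PP_def coeff_sum by simp
  also have "\<dots> = cc n (2*n) * coeff (Bp (2*n)) (2*n)"
  proof (rule sum.mono_neutral_right[of "{0..2*n}" "{2*n}", simplified])
    show "\<forall>i\<in>{0..2*n} - {2*n}. cc n i * coeff (Bp i) (2*n) = 0"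
      by (auto intro!: coeff_eq_0 simp: degree_Bp)
  qed
  finally show ?thesis by (simp add: coeff_Bp)
qed

lemma degree_PP: "degree (PP n) = 2*n" and PP_nz: "PP n \<noteq> 0"
proof -
  have c: "coeff (PP n) (2*n) \<noteq> 0" unfolding coeff_PP using cc_top_nz by simp
  have "degree (PP n) \<le> 2*n" unfolding PP_def
    by (rule degree_sum_le) (auto intro: order.trans[OF degree_smult_le] simp: degree_Bp)
  moreover have "2*n \<le> degree (PP n)" using c by (rule le_degree)
  ultimately show "degree (PP n) = 2*n" by simp
  show "PP n \<noteq> 0" using c by auto
qed

lemma sums_eq: "(\<Sum>i\<le>k. of_nat (k choose i) * cc n i) = (\<Sum>i\<in>{0..2*n}. cc n i * of_nat (k choose i))"
proof -
  define U where "U = {..max k (2*n)}"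
  have "(\<Sum>i\<le>k. of_nat (k choose i) * cc n i) = (\<Sum>i\<in>U. of_nat (k choose i) * cc n i)"
    by (rule sum.mono_neutral_left) (auto simp: U_def)
  also have "\<dots> = (\<Sum>i\<in>U. cc n i * of_nat (k choose i))" by (simp add: mult.commute)
  also have "\<dots> = (\<Sum>i\<in>{0..2*n}. cc n i * of_nat (k choose i))"
    by (rule sum.mono_neutral_right) (auto simp: U_def cc_big)
  finally show ?thesis .
qed

theorem lemma3p4:
  shows "\<exists>P :: nat \<Rightarrow> rat poly.
           (\<forall>n. P n \<noteq> 0 \<and> degree (P n) = 2 * n) \<and>
           (\<forall>k::nat. const_p (sqrtW ^ (2 * k + 1)) =
              fps_const (1 / 2 ^ (2 * k + 1)) * Abs_fps (\<lambda>n. poly (P n) (of_nat k)))"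
proof (intro exI[of _ PP] conjI allI)
  fix n show "PP n \<noteq> 0" by (rule PP_nz)
  show "degree (PP n) = 2 * n" by (rule degree_PP)
next
  fix k :: nat
  show "const_p (sqrtW ^ (2 * k + 1)) =
        fps_const (1 / 2 ^ (2 * k + 1)) * Abs_fps (\<lambda>n. poly (PP n) (of_nat k))"
  proof (rule fps_ext)
    fix n
    have "2^(2*k+1) * ((SS^(2*k+1)) $ n $$ 0) = poly (PP n) (of_nat k)"
      unfolding main_sum poly_PP sums_eq ..
    then show "const_p (sqrtW ^ (2 * k + 1)) $ n =
        (fps_const (1 / 2 ^ (2 * k + 1)) * Abs_fps (\<lambda>n. poly (PP n) (of_nat k))) $ n"
      unfolding const_p_def sqrtW_eq by (simp add: field_simps)
  qed
qed



end
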